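(* Let $(g_\alpha)_{\alpha<\omega_1}\subset\mathcal{I}$. Then there exists $(f_\alpha)_{\alpha<\omega_1}\subset\mathcal{I}$ such that (1) $f_\alpha(n)\le g_\alpha(n)$ for all $\alpha<\omega_1$ and $n\in\mathbb{N}$, and (2) $j(f_\beta)\subset^a j(f_\alpha)$ for all $\alpha<\beta<\omega_1$.
   Context: $\mathcal{I}$ is the class of all non-decreasing maps $f:\mathbb{N}\to\mathbb{N}\cup\{0\}$ with $f(1)=0$, $\lim_{n\to\infty}f(n)=\infty$, and $f(n+1)\le f(n)+1$ for all $n$. The map $j:\mathcal{I}\to[\mathbb{N}]^\omega$ (infinite subsets of $\mathbb{N}$) is $j(f)=\{n\in\mathbb{N}:f(n+1)>f(n)\}$. For infinite $A,B\subset\mathbb{N}$, $A\subset^a B$ means $A\setminus B$ is finite. *)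

theory Defs
  imports Main "HOL-Library.Countable_Set"
begin

text \<open>Positive naturals are represented by n \<ge> 1; values of a function at 0 are irrelevant.\<close>

definition classI :: "(nat \<Rightarrow> nat) set" where
  "classI = {f. (\<forall>n\<ge>1. f n \<le> f (Suc n)) \<and> f 1 = 0 \<and> filterlim f at_top sequentially
                \<and> (\<forall>n\<ge>1. f (Suc n) \<le> f n + 1)}"

definition jmap :: "(nat \<Rightarrow> nat) \<Rightarrow> nat set" where
  "jmap f = {n. n \<ge> 1 \<and> f (Suc n) > f n}"

definition almost_subset :: "nat set \<Rightarrow> nat set \<Rightarrow> bool" where
  "almost_subset A B \<longleftrightarrow> finite (A - B)"

definition omega1_order :: "'a rel \<Rightarrow> bool" where
  "omega1_order r \<longleftrightarrow> Well_order r \<and> \<not> countable (Field r)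
     \<and> (\<forall>a\<in>Field r. countable (underS r a))"

end

theory Submission
  imports Defs
begin

lemma mono_from1:
  assumes "\<forall>n\<ge>1. (h::nat\<Rightarrow>nat) n \<le> h (Suc (n::nat))" "1 \<le> m" "m \<le> n"
  shows "h m \<le> h (n::nat)"
  using assms(3,2)
proof (induction n rule: dec_induct)
  case base then show ?case by simp
next
  case (step k) then show ?case using assms(1) by (meson le_trans order.trans)
qed

lemma from_set:
  assumes B1: "B \<subseteq> {1..}" and Binf: "infinite B"
    and bd: "\<forall>n\<ge>1. card (B \<inter> {..<n}) \<le> h n"
  shows "(\<lambda>n. card (B \<inter> {..<n})) \<in> classI \<and> (\<forall>n\<ge>1. card (B \<inter> {..<n}) \<le> h n)
         \<and> jmap (\<lambda>n. card (B \<inter> {..<n})) = B"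
proof -
  define f where "f = (\<lambda>n. card (B \<inter> {..<n}))"
  have step: "f (Suc n) = f n + (if n \<in> B then 1 else 0)" for n
  proof -
    have "B \<inter> {..<Suc n} = (if n \<in> B then insert n (B \<inter> {..<n}) else B \<inter> {..<n})"
      by (auto simp: less_Suc_eq)
    then show ?thesis unfolding f_def by auto
  qed
  have f1: "f 1 = 0" using B1 unfolding f_def
    by (metis (no_types, lifting) One_nat_def atLeast_iff card.empty disjoint_iff lessThan_iff
        less_one not_one_le_zero subsetD)
  have lim: "filterlim f at_top sequentially"
    unfolding filterlim_at_top
  proof
    fix M :: nat
    obtain C where C: "C \<subseteq> B" "finite C" "card C = M"
      using Binf infinite_arbitrarily_large by blast
    obtain N where N: "\<forall>x\<in>C. x < N"
      using C(2) finite_nat_bounded by blast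
    have "f n \<ge> M" if "n \<ge> N" for n
    proof -
      have "C \<subseteq> B \<inter> {..<n}" using C N that by auto
      then show ?thesis unfolding f_def using C by (metis card_mono finite_Int finite_lessThan)
    qed
    then show "eventually (\<lambda>n. M \<le> f n) sequentially"
      unfolding eventually_sequentially by blast
  qed
  have "f \<in> classI" unfolding classI_def using step f1 lim by auto
  moreover have "jmap f = B" unfolding jmap_def using step B1 by auto
  ultimately show ?thesis using bd unfolding f_def by auto
qed



primrec interS :: "(nat \<Rightarrow> nat set) \<Rightarrow> nat \<Rightarrow> nat set" where
  "interS c 0 = c 0"
| "interS c (Suc k) = interS c k \<inter> c (Suc k)"

definition nxt :: "(nat \<Rightarrow> nat set) \<Rightarrow> (nat \<Rightarrow> nat) \<Rightarrow> nat \<Rightarrow> nat \<Rightarrow> nat" where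
  "nxt T h k p = (SOME y. y \<in> T k \<and> y > p \<and> h y > k)"

primrec seqx :: "(nat \<Rightarrow> nat set) \<Rightarrow> (nat \<Rightarrow> nat) \<Rightarrow> nat \<Rightarrow> nat" where
  "seqx T h 0 = nxt T h 0 0"
| "seqx T h (Suc k) = nxt T h (Suc k) (seqx T h k)"

lemma interS_sub: "i \<le> k \<Longrightarrow> interS c k \<subseteq> c i"
proof (induction k)
  case 0 then show ?case by simp
next
  case (Suc k) then show ?case by (auto simp: le_Suc_eq)
qed

lemma interS_anti: "i \<le> k \<Longrightarrow> interS c k \<subseteq> interS c i"
proof (induction k rule: dec_induct)
  case base then show ?case by simp
next
  case (step k) then show ?case by auto
qed

lemma interS_inf:
  assumes inf: "\<And>i. infinite (c i)" and ch: "\<And>i j. finite (c i - c j) \<or> finite (c j - c i)"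
  shows "infinite (interS c k)"
proof -
  have "\<exists>i. finite (c i - interS c k)"
  proof (induction k)
    case 0 then show ?case by (rule exI[of _ 0]) simp
  next
    case (Suc k)
    then obtain i where i: "finite (c i - interS c k)" by blast
    show ?case
    proof (cases "finite (c i - c (Suc k))")
      case True
      have "c i - interS c (Suc k) \<subseteq> (c i - interS c k) \<union> (c i - c (Suc k))" by auto
      then show ?thesis using True i by (meson finite_UnI finite_subset)
    next
      case False
      then have F: "finite (c (Suc k) - c i)" using ch by blast
      have "c (Suc k) - interS c (Suc k) \<subseteq> (c (Suc k) - c i) \<union> (c i - interS c k)" by auto
      then show ?thesis using F i by (meson finite_UnI finite_subset)
    qed
  qed
  then obtain i where "finite (c i - interS c k)" by blast
  moreover have "c i \<subseteq> (c i - interS c k) \<union> interS c k" by blast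
  ultimately show ?thesis using inf[of i] by (meson finite_UnI finite_subset)
qed

lemma unbounded_classI:
  assumes "h \<in> classI" shows "\<exists>N. \<forall>n\<ge>N. h n > m"
proof -
  have "filterlim h at_top sequentially" using assms unfolding classI_def by blast
  then have "eventually (\<lambda>n. Suc m \<le> h n) sequentially" unfolding filterlim_at_top by blast
  then show ?thesis unfolding eventually_sequentially by (meson Suc_le_lessD)
qed

lemma nxt_prop:
  assumes "infinite (T k)" "h \<in> classI"
  shows "nxt T h k p \<in> T k \<and> nxt T h k p > p \<and> h (nxt T h k p) > k"
proof -
  obtain N where N: "\<forall>n\<ge>N. h n > k" using unbounded_classI[OF assms(2)] by blast
  obtain y where y: "y \<in> T k" "y > max N p" using assms(1) infinite_nat_iff_unbounded by blast
  then have "y \<in> T k \<and> y > p \<and> h y > k" using N by auto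
  then show ?thesis unfolding nxt_def by (rule someI)
qed

lemma key:
  fixes S :: "nat set set" and h :: "nat \<Rightarrow> nat"
  assumes cS: "countable S" and infS: "\<forall>X\<in>S. infinite X"
    and chS: "\<forall>X\<in>S. \<forall>Y\<in>S. finite (X - Y) \<or> finite (Y - X)" and hI: "h \<in> classI"
  shows "\<exists>B. B \<subseteq> {1..} \<and> infinite B \<and> (\<forall>n\<ge>1. card (B \<inter> {..<n}) \<le> h n) \<and> (\<forall>A\<in>S. finite (B - A))"
proof -
  define S' where "S' = insert UNIV S"
  have cS': "countable S'" "S' \<noteq> {}" using cS unfolding S'_def by auto
  define c where "c = from_nat_into S'"
  have rc: "range c = S'" unfolding c_def using cS' by (simp add: range_from_nat_into)
  have inf: "infinite (c i)" for i
  proof -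
    have "c i \<in> S'" using rc by blast
    then show ?thesis using infS unfolding S'_def by auto
  qed
  have ch: "finite (c i - c j) \<or> finite (c j - c i)" for i j
  proof -
    have "c i \<in> S'" "c j \<in> S'" using rc by blast+
    then show ?thesis using chS unfolding S'_def by auto
  qed
  define T where "T = interS c"
  have Tinf: "infinite (T k)" for k unfolding T_def using interS_inf[OF inf ch] .
  define x where "x = seqx T h"
  have np: "nxt T h k p \<in> T k \<and> nxt T h k p > p \<and> h (nxt T h k p) > k" for k p
    by (rule nxt_prop[OF Tinf hI])
  have xp: "x k \<in> T k \<and> h (x k) > k" for k
    unfolding x_def using np by (cases k) auto
  have xs: "x k < x (Suc k)" for k
    unfolding x_def using np by simp
  have x0: "x 0 > 0" unfolding x_def using np by simp
  have sm: "strict_mono x" using xs by (simp add: strict_mono_Suc_iff)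
  have x1: "x k \<ge> 1" for k
  proof -
    have "x 0 \<le> x k" using sm strict_mono_less_eq[of x 0 k] by simp
    then show ?thesis using x0 by simp
  qed
  define B where "B = range x"
  have B1: "B \<subseteq> {1..}" unfolding B_def using x1 by auto
  have Binf: "infinite B" unfolding B_def using sm
    by (simp add: strict_mono_imp_inj_on range_inj_infinite)
  have hmono: "\<forall>n\<ge>1. h n \<le> h (Suc n)" using hI unfolding classI_def by blast
  have bd: "card (B \<inter> {..<n}) \<le> h n" if n1: "n \<ge> 1" for n
  proof -
    have "B \<inter> {..<n} \<subseteq> x ` {..<h n}"
    proof
      fix y assume "y \<in> B \<inter> {..<n}"
      then obtain k where k: "y = x k" "x k < n" unfolding B_def by auto
      have "h (x k) \<le> h n" using mono_from1[OF hmono x1[of k]] k(2) by simp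
      then have "k < h n" using xp[of k] by simp
      then show "y \<in> x ` {..<h n}" using k by blast
    qed
    then have "card (B \<inter> {..<n}) \<le> card (x ` {..<h n})" by (simp add: card_mono)
    also have "\<dots> \<le> card {..<h n}" by (rule card_image_le) simp
    also have "\<dots> = h n" by simp
    finally show ?thesis .
  qed
  have al: "finite (B - A)" if "A \<in> S" for A
  proof -
    have "A \<in> range c" unfolding rc S'_def using that by simp
    then obtain i where i: "c i = A" by auto
    have "B - A \<subseteq> x ` {..<i}"
    proof
      fix y assume "y \<in> B - A"
      then obtain k where k: "y = x k" "x k \<notin> A" unfolding B_def by auto
      have "k < i"
      proof (rule ccontr)
        assume "\<not> k < i"
        then have "T k \<subseteq> c i" unfolding T_def using interS_sub by simp
        then show False using xp[of k] k(2) i by blast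
      qed
      then show "y \<in> x ` {..<i}" using k by blast
    qed
    then show ?thesis using finite_subset by (metis finite_imageI finite_lessThan)
  qed
  show ?thesis apply (rule exI[of _ B]) using B1 Binf bd al by simp
qed


definition goodB :: "('a \<Rightarrow> nat \<Rightarrow> nat) \<Rightarrow> 'a rel \<Rightarrow> ('a \<Rightarrow> nat set) \<Rightarrow> 'a \<Rightarrow> nat set \<Rightarrow> bool" where
  "goodB g r F a B \<longleftrightarrow> B \<subseteq> {1..} \<and> infinite B \<and> (\<forall>n\<ge>1. card (B \<inter> {..<n}) \<le> g a n)
     \<and> (\<forall>b\<in>underS r a. finite (B - F b))"

theorem lemma3p5:
  fixes r :: "'a rel" and g :: "'a \<Rightarrow> nat \<Rightarrow> nat"
  assumes "omega1_order r"
    and "\<forall>a\<in>Field r. g a \<in> classI"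
  shows "\<exists>f :: 'a \<Rightarrow> nat \<Rightarrow> nat.
           (\<forall>a\<in>Field r. f a \<in> classI \<and> (\<forall>n\<ge>1. f a n \<le> g a n))
         \<and> (\<forall>a\<in>Field r. \<forall>b\<in>Field r. (a, b) \<in> r \<and> a \<noteq> b
               \<longrightarrow> almost_subset (jmap (f b)) (jmap (f a)))"
proof -
  have WO: "Well_order r" and cnt: "\<forall>a\<in>Field r. countable (underS r a)"
    using assms(1) unfolding omega1_order_def by auto
  have wo: "wo_rel r" using WO by (simp add: wo_rel_def)
  define R where "R = r - Id"
  have wfR: "wf R" unfolding R_def using wo_rel.WF[OF wo] .
  have RU: "(b, a) \<in> R \<longleftrightarrow> b \<in> underS r a" for a b
    unfolding R_def underS_def by auto
  define H where "H = (\<lambda>F a. SOME B. goodB g r F a B)"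
  define A where "A = wfrec R H"
  have Aeq: "A a = (SOME B. goodB g r A a B)" for a
  proof -
    have "A a = H (cut A R a) a" unfolding A_def by (rule wfrec[OF wfR])
    moreover have "goodB g r (cut A R a) a = goodB g r A a"
    proof -
      have cu: "\<forall>b\<in>underS r a. cut A R a b = A b" using cut_apply RU by metis
      show ?thesis unfolding goodB_def by (intro ext) (simp add: cu cong: ball_cong)
    qed
    ultimately show ?thesis unfolding H_def by simp
  qed
  have good: "a \<in> Field r \<longrightarrow> goodB g r A a (A a)" for a
  proof (induction a rule: wf_induct[OF wfR])
    case (1 a)
    show ?case
    proof
      assume aF: "a \<in> Field r"
      have IH: "goodB g r A b (A b)" if "b \<in> underS r a" for b
      proof -
        have bF: "b \<in> Field r" using that underS_Field by metis
        have "(b, a) \<in> R" using that RU by simp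
        then show ?thesis using 1[rule_format] bF by simp
      qed
      have ex: "\<exists>B. goodB g r A a B"
      proof -
        have "\<exists>B. B \<subseteq> {1..} \<and> infinite B \<and> (\<forall>n\<ge>1. card (B \<inter> {..<n}) \<le> g a n)
               \<and> (\<forall>X\<in>A ` underS r a. finite (B - X))"
        proof (rule key)
          show "countable (A ` underS r a)" using cnt aF by blast
          show "\<forall>X\<in>A ` underS r a. infinite X" using IH unfolding goodB_def by blast
          show "g a \<in> classI" using assms(2) aF by blast
          show "\<forall>X\<in>A ` underS r a. \<forall>Y\<in>A ` underS r a. finite (X - Y) \<or> finite (Y - X)"
          proof (intro ballI)
            fix X Y assume "X \<in> A ` underS r a" "Y \<in> A ` underS r a"
            then obtain b c where bc: "b \<in> underS r a" "c \<in> underS r a" "X = A b" "Y = A c" by blast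
            have bcF: "b \<in> Field r" "c \<in> Field r" using bc underS_Field by metis+
            show "finite (X - Y) \<or> finite (Y - X)"
            proof (cases "b = c")
              case True then show ?thesis using bc by simp
            next
              case False
              then have "(b, c) \<in> r \<or> (c, b) \<in> r" using wo_rel.TOTALS[OF wo] bcF by blast
              then have "b \<in> underS r c \<or> c \<in> underS r b" using False unfolding underS_def by auto
              then show ?thesis
              proof
                assume "b \<in> underS r c"
                then have "finite (A c - A b)" using IH[OF bc(2)] by (simp add: goodB_def)
                then show ?thesis using bc by simp
              next
                assume "c \<in> underS r b"
                then have "finite (A b - A c)" using IH[OF bc(1)] by (simp add: goodB_def)
                then show ?thesis using bc by simp
              qed
            qed
          qed
        qed
        then obtain B where B: "B \<subseteq> {1..}" "infinite B" "\<forall>n\<ge>1. card (B \<inter> {..<n}) \<le> g a n"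
               "\<forall>X\<in>A ` underS r a. finite (B - X)" by blast
        have "goodB g r A a B" unfolding goodB_def using B by simp
        then show ?thesis by blast
      qed
      show "goodB g r A a (A a)" unfolding Aeq[of a] using ex by (rule someI_ex)
    qed
  qed
  define f where "f = (\<lambda>a n. card (A a \<inter> {..<n}))"
  have fs: "f a \<in> classI \<and> (\<forall>n\<ge>1. f a n \<le> g a n) \<and> jmap (f a) = A a" if "a \<in> Field r" for a
    using good[of a] that from_set[of "A a" "g a"] unfolding goodB_def f_def by blast
  show ?thesis
  proof (rule exI[of _ f], intro conjI ballI impI)
    fix a assume "a \<in> Field r" then show "f a \<in> classI" using fs by blast
  next
    fix a assume "a \<in> Field r" then show "\<forall>n\<ge>1. f a n \<le> g a n" using fs by blast
  next
    fix a b assume ab: "a \<in> Field r" "b \<in> Field r" "(a, b) \<in> r \<and> a \<noteq> b"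
    then have "a \<in> underS r b" unfolding underS_def by auto
    then have "finite (A b - A a)" using good[of b] ab unfolding goodB_def by blast
    then show "almost_subset (jmap (f b)) (jmap (f a))"
      unfolding almost_subset_def using fs ab by simp
  qed
qed

end
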